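(* Let $(t,x,m)\in\mathbf D$. For each $\delta>0$ there exists $\nu^\delta\in\mathcal U(t,x,m+\delta)$ such that $F(t,x;\nu^\delta)\ge\delta^{-1}\wedge V(t,x,m+\delta)-\delta$. Let such $\nu^\delta$ be fixed, let $\delta_0>0$, and assume that for all $0<\delta\le\delta_0$ there exists $\tilde\nu^\delta\in\mathcal U(t,x,m)$ such that $\lim_{\delta\downarrow0}P\{X^{\nu^\delta}_{t,x}(T)\ne X^{\tilde\nu^\delta}_{t,x}(T)\}=0$ and the family $\{[f(X^{\nu^\delta}_{t,x}(T))-f(X^{\tilde\nu^\delta}_{t,x}(T))]^+:\ 0<\delta\le\delta_0\}\subseteq L^1(P)$ is uniformly integrable. Then $m'\mapsto V(t,x,m')$ is right continuous at $m$.
   Context: Fix $T\in(0,\infty)$, a probability space $(\Omega,\mathcal F,P)$ with a filtration, and a separable metric space $S$. For each $t\in[0,T]$ a set $\mathcal U_t$ of controls; for $(t,x)\in[0,T]\times S$ and $\nu\in\mathcal U_t$ a càdlàg adapted $S$-valued process $X^\nu_{t,x}$ on $[t,T]$. Measurable $f,g:S\to\mathbb R$ with $E|f(X^\nu_{t,x}(T))|<\infty$, $E|g(X^\nu_{t,x}(T))|<\infty$ for all $\nu\in\mathcal U_t$. $F(t,x;\nu):=E[f(X^\nu_{t,x}(T))]$, $G(t,x;\nu):=E[g(X^\nu_{t,x}(T))]$, $\mathcal U(t,x,m):=\{\nu\in\mathcal U_t:G(t,x;\nu)\le m\}$, $V(t,x,m):=\sup_{\nu\in\mathcal U(t,x,m)}F(t,x;\nu)$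 ($\sup\emptyset=-\infty$), and $\mathbf D:=\{(t,x,m)\in[0,T]\times S\times\mathbb R:\ \mathcal U(t,x,m)\ne\emptyset\}$. *)

theory Defs
  imports "HOL-Probability.Probability"
begin

text \<open>Setting.  \<open>M\<close>: probability space; \<open>Fil\<close>: filtration; \<open>U t\<close>: the set of controls
  admissible at time \<open>t\<close>; \<open>X t x \<nu> s \<omega>\<close>: the controlled state process \<open>X^\<nu>_{t,x}(s)\<close> at time
  \<open>s \<in> [t,T]\<close> and sample point \<open>\<omega>\<close>.\<close>

definition cadlag_on :: "real set \<Rightarrow> (real \<Rightarrow> 's::topological_space) \<Rightarrow> bool" where
  "cadlag_on I p \<longleftrightarrow>
     (\<forall>s\<in>I. (p \<longlongrightarrow> p s) (at s within (I \<inter> {s<..}))) \<and>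
     (\<forall>s\<in>I. \<exists>l. (p \<longlongrightarrow> l) (at s within (I \<inter> {..<s})))"

definition Fun :: "'w measure \<Rightarrow> real \<Rightarrow> (real \<Rightarrow> 's \<Rightarrow> 'c \<Rightarrow> real \<Rightarrow> 'w \<Rightarrow> 's)
    \<Rightarrow> ('s \<Rightarrow> real) \<Rightarrow> real \<Rightarrow> 's \<Rightarrow> 'c \<Rightarrow> real" where
  "Fun M T X f t x \<nu> = integral\<^sup>L M (\<lambda>\<omega>. f (X t x \<nu> T \<omega>))"

definition Uc :: "'w measure \<Rightarrow> real \<Rightarrow> (real \<Rightarrow> 'c set) \<Rightarrow> (real \<Rightarrow> 's \<Rightarrow> 'c \<Rightarrow> real \<Rightarrow> 'w \<Rightarrow> 's)
    \<Rightarrow> ('s \<Rightarrow> real) \<Rightarrow> real \<Rightarrow> 's \<Rightarrow> real \<Rightarrow> 'c set" where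
  "Uc M T U X g t x m = {\<nu> \<in> U t. Fun M T X g t x \<nu> \<le> m}"

text \<open>Value function, extended-real valued; \<open>Sup {} = -\<infinity>\<close>.\<close>
definition Val :: "'w measure \<Rightarrow> real \<Rightarrow> (real \<Rightarrow> 'c set) \<Rightarrow> (real \<Rightarrow> 's \<Rightarrow> 'c \<Rightarrow> real \<Rightarrow> 'w \<Rightarrow> 's)
    \<Rightarrow> ('s \<Rightarrow> real) \<Rightarrow> ('s \<Rightarrow> real) \<Rightarrow> real \<Rightarrow> 's \<Rightarrow> real \<Rightarrow> ereal" where
  "Val M T U X f g t x m = (SUP \<nu>\<in>Uc M T U X g t x m. ereal (Fun M T X f t x \<nu>))"

definition Dom :: "'w measure \<Rightarrow> real \<Rightarrow> (real \<Rightarrow> 'c set) \<Rightarrow> (real \<Rightarrow> 's \<Rightarrow> 'c \<Rightarrow> real \<Rightarrow> 'w \<Rightarrow> 's)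
    \<Rightarrow> ('s \<Rightarrow> real) \<Rightarrow> (real \<times> 's \<times> real) set" where
  "Dom M T U X g = {(t, x, m). t \<in> {0..T} \<and> Uc M T U X g t x m \<noteq> {}}"

definition unif_integrable :: "'w measure \<Rightarrow> 'i set \<Rightarrow> ('i \<Rightarrow> 'w \<Rightarrow> real) \<Rightarrow> bool" where
  "unif_integrable M I h \<longleftrightarrow>
     (\<forall>i\<in>I. integrable M (h i)) \<and>
     (\<forall>\<epsilon>>0. \<exists>K. \<forall>i\<in>I.
        (\<integral>\<omega>. \<bar>h i \<omega>\<bar> * indicator {\<omega>. K < \<bar>h i \<omega>\<bar>} \<omega> \<partial>M) \<le> \<epsilon>)"

end

theory Submission
  imports Defs
begin

lemma exp_bound:
  fixes h :: "'w \<Rightarrow> real"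
  assumes P: "prob_space M" and hm: "integrable M h" and hpos: "\<And>\<omega>. h \<omega> \<ge> 0"
    and A: "A \<in> sets M" and h0: "\<And>\<omega>. \<omega> \<in> space M \<Longrightarrow> \<omega> \<notin> A \<Longrightarrow> h \<omega> = 0"
    and ui: "(\<integral>\<omega>. \<bar>h \<omega>\<bar> * indicator {\<omega>. K < \<bar>h \<omega>\<bar>} \<omega> \<partial>M) \<le> e"
  shows "integral\<^sup>L M h \<le> e + max K 0 * measure M A"
proof -
  interpret prob_space M by (rule P)
  have hb: "h \<in> borel_measurable M" using hm by auto
  have i1: "integrable M (\<lambda>\<omega>. \<bar>h \<omega>\<bar> * indicator {\<omega>. K < \<bar>h \<omega>\<bar>} \<omega>)"
    by (rule Bochner_Integration.integrable_bound[OF integrable_abs[OF hm]]) (use hb in \<open>auto simp: indicator_def\<close>)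
  have i2: "integrable M (\<lambda>\<omega>. max K 0 * indicator A \<omega>)"
    using A by (intro integrable_mult_right integrable_real_indicator) (auto simp: emeasure_eq_measure)
  have "integral\<^sup>L M h \<le> (\<integral>\<omega>. \<bar>h \<omega>\<bar> * indicator {\<omega>. K < \<bar>h \<omega>\<bar>} \<omega> + max K 0 * indicator A \<omega> \<partial>M)"
  proof (rule integral_mono_AE[OF hm Bochner_Integration.integrable_add[OF i1 i2]], rule AE_I2)
    fix \<omega> assume "\<omega> \<in> space M"
    then show "h \<omega> \<le> \<bar>h \<omega>\<bar> * indicator {\<omega>. K < \<bar>h \<omega>\<bar>} \<omega> + max K 0 * indicator A \<omega>"
      using h0[of \<omega>] hpos[of \<omega>] by (auto simp: indicator_def)
  qed
  also have "\<dots> = (\<integral>\<omega>. \<bar>h \<omega>\<bar> * indicator {\<omega>. K < \<bar>h \<omega>\<bar>} \<omega> \<partial>M) + max K 0 * measure M A"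
    using i1 i2 A by (simp add: Int_absorb2 sets.sets_into_space)
  finally show ?thesis using ui by linarith
qed
theorem mainTheorem5:
  fixes M :: "'w measure" and Fil :: "real \<Rightarrow> 'w measure" and T :: real
    and U :: "real \<Rightarrow> 'c set"
    and X :: "real \<Rightarrow> 's::{metric_space, second_countable_topology} \<Rightarrow> 'c \<Rightarrow> real \<Rightarrow> 'w \<Rightarrow> 's"
    and f g :: "'s \<Rightarrow> real"
    and t :: real and x :: 's and m :: real
  assumes T_pos: "0 < T"
    and prob: "prob_space M"
    and filt: "filtration (space M) Fil"
    and filt_sub: "\<And>s. sets (Fil s) \<subseteq> sets M"
    and adapted: "\<And>t x \<nu> s. t \<in> {0..T} \<Longrightarrow> \<nu> \<in> U t \<Longrightarrow> s \<in> {t..T} \<Longrightarrow>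
                    X t x \<nu> s \<in> borel_measurable (Fil s)"
    and cadlag: "\<And>t x \<nu> \<omega>. t \<in> {0..T} \<Longrightarrow> \<nu> \<in> U t \<Longrightarrow> \<omega> \<in> space M \<Longrightarrow>
                    cadlag_on {t..T} (\<lambda>s. X t x \<nu> s \<omega>)"
    and f_meas: "f \<in> borel_measurable borel"
    and g_meas: "g \<in> borel_measurable borel"
    and f_int: "\<And>t x \<nu>. t \<in> {0..T} \<Longrightarrow> \<nu> \<in> U t \<Longrightarrow> integrable M (\<lambda>\<omega>. f (X t x \<nu> T \<omega>))"
    and g_int: "\<And>t x \<nu>. t \<in> {0..T} \<Longrightarrow> \<nu> \<in> U t \<Longrightarrow> integrable M (\<lambda>\<omega>. g (X t x \<nu> T \<omega>))"
    and inD: "(t, x, m) \<in> Dom M T U X g"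
  shows "(\<forall>\<delta>>0. \<exists>\<nu>\<in>Uc M T U X g t x (m + \<delta>).
            ereal (Fun M T X f t x \<nu>) \<ge> min (ereal (1 / \<delta>)) (Val M T U X f g t x (m + \<delta>)) - ereal \<delta>)
    \<and> (\<forall>\<nu>d :: real \<Rightarrow> 'c. \<forall>\<delta>0 :: real.
          (\<forall>\<delta>>0. \<nu>d \<delta> \<in> Uc M T U X g t x (m + \<delta>) \<and>
                  ereal (Fun M T X f t x (\<nu>d \<delta>)) \<ge> min (ereal (1 / \<delta>)) (Val M T U X f g t x (m + \<delta>)) - ereal \<delta>)
          \<longrightarrow> 0 < \<delta>0
          \<longrightarrow> (\<exists>\<nu>t :: real \<Rightarrow> 'c.
                 (\<forall>\<delta>\<in>{0<..\<delta>0}. \<nu>t \<delta> \<in> Uc M T U X g t x m)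
               \<and> ((\<lambda>\<delta>. measure M {\<omega>\<in>space M. X t x (\<nu>d \<delta>) T \<omega> \<noteq> X t x (\<nu>t \<delta>) T \<omega>})
                     \<longlongrightarrow> 0) (at_right 0)
               \<and> unif_integrable M {0<..\<delta>0}
                   (\<lambda>\<delta> \<omega>. max 0 (f (X t x (\<nu>d \<delta>) T \<omega>) - f (X t x (\<nu>t \<delta>) T \<omega>))))
          \<longrightarrow> continuous (at_right m) (\<lambda>m'. Val M T U X f g t x m'))"
proof -
  let ?F = "Fun M T X f t x" and ?V = "Val M T U X f g t x" and ?Uc = "Uc M T U X g t x"
  interpret P: prob_space M by (rule prob)
  have t: "t \<in> {0..T}" and ne: "?Uc m \<noteq> {}" using inD by (auto simp: Dom_def)
  have mono: "?Uc m1 \<subseteq> ?Uc m2" if "m1 \<le> m2" for m1 m2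
    using that by (auto simp: Uc_def)
  have Vmono: "?V m1 \<le> ?V m2" if "m1 \<le> m2" for m1 m2
    unfolding Val_def by (rule SUP_subset_mono[OF mono[OF that] order_refl])
  have Fle: "ereal (?F \<nu>) \<le> ?V m'" if "\<nu> \<in> ?Uc m'" for \<nu> m'
    unfolding Val_def by (rule SUP_upper[OF that])
  obtain \<nu>0 where \<nu>0: "\<nu>0 \<in> ?Uc m" using ne by blast
  have Vlow: "?V m' > -\<infinity>" if "m \<le> m'" for m'
    using Fle[OF subsetD[OF mono[OF that] \<nu>0]] by auto
  have meas: "(\<lambda>\<omega>. X t x \<nu> T \<omega>) \<in> borel_measurable M" if "\<nu> \<in> U t" for \<nu>
  proof -
    have "X t x \<nu> T \<in> borel_measurable (Fil T)" using adapted[OF t that] t by auto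
    moreover have "space (Fil T) = space M" using filt by (simp add: filtration_def)
    ultimately show ?thesis using measurable_mono[of borel borel "Fil T" M] filt_sub[of T] by auto
  qed
  have part1: "\<forall>\<delta>>0. \<exists>\<nu>\<in>?Uc (m + \<delta>).
            ereal (?F \<nu>) \<ge> min (ereal (1 / \<delta>)) (?V (m + \<delta>)) - ereal \<delta>"
  proof (intro allI impI)
    fix \<delta> :: real assume d: "\<delta> > 0"
    have lowd: "?V (m+\<delta>) > -\<infinity>" using Vlow d by auto
    have "min (ereal (1 / \<delta>)) (?V (m + \<delta>)) - ereal \<delta> < ?V (m+\<delta>)"
    proof (cases "?V (m+\<delta>)")
      case (real r)
      then show ?thesis using d by (auto simp: min_def)
    next
      case PInf
      then show ?thesis by (simp add: min_def)
    qed (use lowd in auto)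
    then obtain \<nu> where "\<nu> \<in> ?Uc (m+\<delta>)" "min (ereal (1 / \<delta>)) (?V (m + \<delta>)) - ereal \<delta> < ereal (?F \<nu>)"
      unfolding Val_def less_SUP_iff by blast
    then show "\<exists>\<nu>\<in>?Uc (m + \<delta>). ereal (?F \<nu>) \<ge> min (ereal (1 / \<delta>)) (?V (m + \<delta>)) - ereal \<delta>"
      by (auto intro!: bexI[of _ \<nu>] less_imp_le)
  qed
  show ?thesis
  proof (intro conjI part1 allI impI)
    fix \<nu>d :: "real \<Rightarrow> 'c" and \<delta>0 :: real
    assume H1: "\<forall>\<delta>>0. \<nu>d \<delta> \<in> ?Uc (m + \<delta>) \<and>
                  ereal (?F (\<nu>d \<delta>)) \<ge> min (ereal (1 / \<delta>)) (?V (m + \<delta>)) - ereal \<delta>"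
      and H2: "0 < \<delta>0"
      and H3: "\<exists>\<nu>t :: real \<Rightarrow> 'c.
                 (\<forall>\<delta>\<in>{0<..\<delta>0}. \<nu>t \<delta> \<in> ?Uc m)
               \<and> ((\<lambda>\<delta>. measure M {\<omega>\<in>space M. X t x (\<nu>d \<delta>) T \<omega> \<noteq> X t x (\<nu>t \<delta>) T \<omega>})
                     \<longlongrightarrow> 0) (at_right 0)
               \<and> unif_integrable M {0<..\<delta>0}
                   (\<lambda>\<delta> \<omega>. max 0 (f (X t x (\<nu>d \<delta>) T \<omega>) - f (X t x (\<nu>t \<delta>) T \<omega>)))"
    from H3 obtain \<nu>t where t1: "\<forall>\<delta>\<in>{0<..\<delta>0}. \<nu>t \<delta> \<in> ?Uc m"
      and t2: "((\<lambda>\<delta>. measure M {\<omega>\<in>space M. X t x (\<nu>d \<delta>) T \<omega> \<noteq> X t x (\<nu>t \<delta>) T \<omega>})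
                     \<longlongrightarrow> 0) (at_right 0)"
      and t3: "unif_integrable M {0<..\<delta>0}
                   (\<lambda>\<delta> \<omega>. max 0 (f (X t x (\<nu>d \<delta>) T \<omega>) - f (X t x (\<nu>t \<delta>) T \<omega>)))"
      by blast
    show "continuous (at_right m) ?V"
    proof (cases "?V m = \<infinity>")
      case True
      have "\<forall>\<^sub>F m' in at_right m. ?V m' = ?V m"
      proof (rule eventually_mono[OF eventually_at_right_less[of m]])
        fix y assume "m < y"
        then have "?V m \<le> ?V y" by (intro Vmono) simp
        then show "?V y = ?V m" using True by simp
      qed
      then show ?thesis unfolding continuous_within by (rule tendsto_eventually)
    next
      case False
      then obtain vm where vm: "?V m = ereal vm" using Vlow[of m] by (cases "?V m") auto
      have key: "\<exists>d>0. \<forall>\<delta>. 0 < \<delta> \<and> \<delta> < d \<longrightarrow> ?V (m+\<delta>) \<le> ereal (vm + \<epsilon>)" if e: "\<epsilon> > 0" for \<epsilon>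
      proof -
        define h where "h = (\<lambda>\<delta> \<omega>. max 0 (f (X t x (\<nu>d \<delta>) T \<omega>) - f (X t x (\<nu>t \<delta>) T \<omega>)))"
        have hint: "\<forall>\<delta>\<in>{0<..\<delta>0}. integrable M (h \<delta>)"
          and ui: "\<forall>\<epsilon>>0. \<exists>K. \<forall>\<delta>\<in>{0<..\<delta>0}. (\<integral>\<omega>. \<bar>h \<delta> \<omega>\<bar> * indicator {\<omega>. K < \<bar>h \<delta> \<omega>\<bar>} \<omega> \<partial>M) \<le> \<epsilon>"
          using t3 unfolding unif_integrable_def h_def by blast+
        have e6: "\<epsilon>/6 > 0" using e by simp
        obtain K where K: "\<forall>\<delta>\<in>{0<..\<delta>0}. (\<integral>\<omega>. \<bar>h \<delta> \<omega>\<bar> * indicator {\<omega>. K < \<bar>h \<delta> \<omega>\<bar>} \<omega> \<partial>M) \<le> \<epsilon>/6"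
          using ui e6 by blast
        define c where "c = max K 0 + 1"
        have c: "c > 0" "max K 0 \<le> c" unfolding c_def by auto
        have ec: "\<epsilon> / (6*c) > 0" using e c by simp
        have "\<forall>\<^sub>F \<delta> in at_right 0. measure M {\<omega>\<in>space M. X t x (\<nu>d \<delta>) T \<omega> \<noteq> X t x (\<nu>t \<delta>) T \<omega>} < \<epsilon> / (6*c)"
          using order_tendstoD(2)[OF t2 ec] .
        then obtain d1 where d1: "d1 > 0" "\<And>y. 0 < y \<Longrightarrow> y < d1 \<Longrightarrow>
            measure M {\<omega>\<in>space M. X t x (\<nu>d y) T \<omega> \<noteq> X t x (\<nu>t y) T \<omega>} < \<epsilon> / (6*c)"
          unfolding eventually_at_right_field by auto
        define d where "d = min d1 (min \<delta>0 (min (\<epsilon>/3) (1/(\<bar>vm\<bar>+\<epsilon>+1))))"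
        have dpos: "d > 0" unfolding d_def using d1 H2 e by (simp add: add_pos_nonneg)
        show ?thesis
        proof (intro exI[of _ d] conjI allI impI dpos)
          fix \<delta> :: real assume "0 < \<delta> \<and> \<delta> < d"
          then have dp: "0 < \<delta>" and dd1: "\<delta> < d1" and dd0: "\<delta> \<le> \<delta>0" and de: "\<delta> < \<epsilon>/3"
            and dv: "\<delta> < 1/(\<bar>vm\<bar>+\<epsilon>+1)" by (auto simp: d_def)
          have dI: "\<delta> \<in> {0<..\<delta>0}" using dp dd0 by simp
          have nt: "\<nu>t \<delta> \<in> ?Uc m" using t1 dI by blast
          then have ntU: "\<nu>t \<delta> \<in> U t" by (simp add: Uc_def)
          have nd: "\<nu>d \<delta> \<in> ?Uc (m+\<delta>)" and H1d: "ereal (?F (\<nu>d \<delta>)) \<ge> min (ereal (1 / \<delta>)) (?V (m + \<delta>)) - ereal \<delta>"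
            using H1 dp by blast+
          then have ndU: "\<nu>d \<delta> \<in> U t" by (simp add: Uc_def)
          let ?A = "{\<omega>\<in>space M. X t x (\<nu>d \<delta>) T \<omega> \<noteq> X t x (\<nu>t \<delta>) T \<omega>}"
          have gm: "(\<lambda>\<omega>. dist (X t x (\<nu>d \<delta>) T \<omega>) (X t x (\<nu>t \<delta>) T \<omega>)) \<in> borel_measurable M"
            using meas[OF ndU] meas[OF ntU] by (rule borel_measurable_dist)
          have "?A = (\<lambda>\<omega>. dist (X t x (\<nu>d \<delta>) T \<omega>) (X t x (\<nu>t \<delta>) T \<omega>)) -` {0<..} \<inter> space M"
            by auto
          then have Am: "?A \<in> sets M" using measurable_sets[OF gm, of "{0<..}"] by simp
          have hE: "integral\<^sup>L M (h \<delta>) \<le> \<epsilon>/6 + max K 0 * measure M ?A"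
          proof (rule exp_bound[OF prob])
            show "integrable M (h \<delta>)" using hint dI by blast
            show "\<And>\<omega>. 0 \<le> h \<delta> \<omega>" unfolding h_def by simp
            show "?A \<in> sets M" by (rule Am)
            show "\<And>\<omega>. \<omega> \<in> space M \<Longrightarrow> \<omega> \<notin> ?A \<Longrightarrow> h \<delta> \<omega> = 0" unfolding h_def by auto
            show "(\<integral>\<omega>. \<bar>h \<delta> \<omega>\<bar> * indicator {\<omega>. K < \<bar>h \<delta> \<omega>\<bar>} \<omega> \<partial>M) \<le> \<epsilon>/6" using K dI by blast
          qed
          have mA: "measure M ?A < \<epsilon> / (6*c)" using d1(2)[OF dp dd1] .
          have "max K 0 * measure M ?A \<le> c * (\<epsilon> / (6*c))"
            using mA c by (intro mult_mono) auto
          also have "\<dots> = \<epsilon>/6" using c by simp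
          finally have hE2: "integral\<^sup>L M (h \<delta>) \<le> \<epsilon>/3" using hE by linarith
          have "?F (\<nu>d \<delta>) - ?F (\<nu>t \<delta>) = (\<integral>\<omega>. f (X t x (\<nu>d \<delta>) T \<omega>) - f (X t x (\<nu>t \<delta>) T \<omega>) \<partial>M)"
            unfolding Fun_def using f_int[OF t ndU] f_int[OF t ntU] by (simp add: Bochner_Integration.integral_diff)
          also have "\<dots> \<le> integral\<^sup>L M (h \<delta>)"
            using f_int[OF t ndU] f_int[OF t ntU] hint dI
            by (intro integral_mono) (auto simp: h_def)
          finally have Fd1: "?F (\<nu>d \<delta>) - ?F (\<nu>t \<delta>) \<le> \<epsilon>/3" using hE2 by linarith
          have "ereal (?F (\<nu>t \<delta>)) \<le> ereal vm" using Fle[OF nt] vm by simp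
          then have Fd: "?F (\<nu>d \<delta>) \<le> vm + \<epsilon>/3" using Fd1 by simp
          have inv: "1/\<delta> > \<bar>vm\<bar>+\<epsilon>+1"
          proof -
            have p: "\<bar>vm\<bar>+\<epsilon>+1 > 0" using e by linarith
            have "\<delta> * (\<bar>vm\<bar>+\<epsilon>+1) < 1" using dv p by (simp add: field_simps)
            then show ?thesis using dp by (simp add: field_simps)
          qed
          show "?V (m+\<delta>) \<le> ereal (vm + \<epsilon>)"
          proof (cases "?V (m+\<delta>) \<le> ereal (1/\<delta>)")
            case True
            then have "min (ereal (1/\<delta>)) (?V (m+\<delta>)) = ?V (m+\<delta>)" by (rule min_absorb2)
            then have "?V (m+\<delta>) - ereal \<delta> \<le> ereal (?F (\<nu>d \<delta>))" using H1d by simp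
            note vv = this
            show ?thesis
            proof (cases "?V (m+\<delta>)")
              case (real r)
              then have "r - \<delta> \<le> ?F (\<nu>d \<delta>)" using vv by simp
              then have "r \<le> vm + \<epsilon>" using Fd de e by linarith
              then show ?thesis using real by simp
            qed (use vv True in auto)
          next
            case False
            then have "min (ereal (1/\<delta>)) (?V (m+\<delta>)) = ereal (1/\<delta>)" by (intro min_absorb1) simp
            then have "ereal (1/\<delta>) - ereal \<delta> \<le> ereal (?F (\<nu>d \<delta>))" using H1d by simp
            then have "1/\<delta> - \<delta> \<le> vm + \<epsilon>/3" using Fd by simp
            then show ?thesis using inv de dp by (auto simp: abs_if split: if_splits)
          qed
        qed
      qed
      show ?thesis
        unfolding continuous_within vm
      proof (rule order_tendstoI)
        fix a assume "a < ereal vm"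
        show "\<forall>\<^sub>F m' in at_right m. a < ?V m'"
        proof (rule eventually_mono[OF eventually_at_right_less[of m]])
          fix y assume "m < y"
          then have "?V m \<le> ?V y" by (intro Vmono) simp
          then show "a < ?V y" using vm \<open>a < ereal vm\<close> by simp
        qed
      next
        fix a assume a: "ereal vm < a"
        obtain \<epsilon> where e: "\<epsilon> > 0" "ereal (vm + \<epsilon>) < a"
        proof (cases a)
          case (real r)
          then have "vm < r" using a by simp
          then have "vm + (r - vm)/2 < r" "(r - vm)/2 > 0" by (simp_all add: field_simps)
          then show ?thesis using that[of "(r - vm)/2"] real by auto
        next
          case PInf
          then show ?thesis using that[of 1] by auto
        qed (use a in auto)
        obtain d where d: "d > 0" "\<And>\<delta>. 0 < \<delta> \<Longrightarrow> \<delta> < d \<Longrightarrow> ?V (m+\<delta>) \<le> ereal (vm + \<epsilon>)"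
          using key[OF e(1)] by blast
        show "\<forall>\<^sub>F m' in at_right m. ?V m' < a"
          unfolding eventually_at_right_field
        proof (intro exI[of _ "m + d"] conjI allI impI)
          fix y assume "m < y" "y < m + d"
          then show "?V y < a" using d(2)[of "y - m"] e(2) by auto
        qed (use d in auto)
      qed
    qed
  qed
qed

end
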